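(* Let $d^0, d^{L+1} \in \mathbb{N}$ and let $\mathcal{F} = (\mathbb{R}^{d^{L+1}})^{\mathbb{R}^{d^0}}$ be the space of all functions $f \colon \mathbb{R}^{d^0} \to \mathbb{R}^{d^{L+1}}$, equipped with the product topology and the usual Borel product $\sigma$-algebra. Let $(P_{f_n})_{n \geq 1}$ be a sequence of probability distributions on $\mathcal{F}$ (the function-space priors of a sequence of Bayesian neural networks) and let $P_f$ be a probability distribution on $\mathcal{F}$ such that $P_{f_n} \Rightarrow P_f$ (weak convergence). Let $D = \{(x_i, y_i)\}_{i=1}^m$ be a fixed finite dataset with inputs $\mathcal{X} = \{x_i\}_{i=1}^m \subset \mathbb{R}^{d^0}$, and for $f \in \mathcal{F}$ write $f(\mathcal{X}) = [f(x)]_{x \in \mathcal{X}} \in \mathbb{R}^{|D| d^{L+1}}$. Let $\ell \colon \mathbb{R}^{|D| d^{L+1}} \to [0,\infty)$ be a continuous bounded likelihood function satisfying the likelihood assumption described in the context, and assume $\int \ell(f(\mathcal{X}))\, dP_f(f) > 0$. Let $P_{f_n \mid D}$ and $P_{f \mid D}$ denote the Bayesian posteriors induced by the likelihood $\ell$ and the priors $P_{f_n}$ and $P_f$ respectively, i.e. the probability measures on $\mathcal{F}$ with $$\frac{dP_{f_n\mid D}}{dP_{f_n}}(f) = \frac{\ell(f(\mathcal{X}))}{\int \ell(g(\mathcal{X}))\,dP_{f_n}(g)}, \qquad \frac{dP_{f\mid D}}{dP_{f}}(f) = \frac{\ell(f(\mathcal{X}))}{\int \ell(g(\mathcal{X}))\,dP_{f}(g)}.$$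 Then $P_{f_n \mid D} \Rightarrow P_{f \mid D}$.
   Context: Weak convergence $P_n \Rightarrow P$ means $\int h\, dP_n \to \int h \, dP$ for every real-valued continuous bounded $h$. Likelihood assumption: the targets $\mathcal{Y} = \{y_i\}_{i=1}^m$ depend on the network parameters $\theta_n$ and the inputs $\mathcal{X}$ only through the network outputs $f_n(\mathcal{X}) = [f_n(x)]_{x\in\mathcal{X}} \in \mathbb{R}^{|D| d^{L+1}}$; there exists a measure $\nu$ such that the conditional distribution $P_{\mathcal{Y} \mid f_n(\mathcal{X})}$ is absolutely continuous with respect to $\nu$ for every value of $f_n(\mathcal{X})$; and the likelihood $\ell_n(f_n(\mathcal{X})) := \frac{dP_{\mathcal{Y} \mid f_n(\mathcal{X})}}{d\nu}(\mathcal{Y})$, viewed as a function of $f_n(\mathcal{X})$, satisfies $\ell_n = \ell$ for all $n$, with $\ell \colon \mathbb{R}^{|D| d^{L+1}} \to [0,\infty)$ continuous and bounded. (Examples: Gaussian likelihood $\ell \propto \exp\{-\frac{1}{2\sigma^2}\sum_i \|y_i - f_n(x_i)\|^2\}$, or categorical likelihood with softmax.) *)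

theory Defs
  imports "HOL-Probability.Probability"
begin

text \<open>The type of functions carries the product topology (Function_Topology).\<close>
definition fun_space :: "('a::topological_space \<Rightarrow> 'b::topological_space) measure" where
  "fun_space = PiM UNIV (\<lambda>_. borel)"

definition weak_conv :: "(nat \<Rightarrow> 'a::topological_space measure) \<Rightarrow> 'a measure \<Rightarrow> bool" where
  "weak_conv Pn P \<longleftrightarrow>
     (\<forall>h :: 'a \<Rightarrow> real. h \<in> borel_measurable P \<and> continuous_on UNIV h \<and> bounded (range h) \<longrightarrow>
        (\<lambda>n. \<integral>x. h x \<partial>(Pn n)) \<longlonglongrightarrow> (\<integral>x. h x \<partial>P))"

definition posterior :: "'a measure \<Rightarrow> ('a \<Rightarrow> real) \<Rightarrow> 'a measure" where
  "posterior P L = density P (\<lambda>f. ennreal (L f / (\<integral>g. L g \<partial>P)))"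

end

theory Submission
  imports Defs
begin

lemma meas_vec_lambda:
  fixes g :: "'a \<Rightarrow> 'i::finite \<Rightarrow> 'b::euclidean_space"
  assumes "\<And>i. (\<lambda>x. g x i) \<in> borel_measurable M"
  shows "(\<lambda>x. \<chi> i. g x i) \<in> borel_measurable M"
proof -
  have "(\<lambda>x. (\<chi> i. g x i) \<bullet> b) \<in> borel_measurable M" if "b \<in> Basis" for b
  proof -
    from that obtain i u where b: "b = axis i u" "u \<in> Basis" by (auto simp: Basis_vec_def)
    have "(\<lambda>x. (\<chi> i. g x i) \<bullet> b) = (\<lambda>x. g x i \<bullet> u)" by (simp add: b inner_axis)
    also have "\<dots> \<in> borel_measurable M" using assms[of i] by measurable
    finally show ?thesis .
  qed
  then show ?thesis by (subst borel_measurable_euclidean_space) auto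
qed

lemma L_meas:
  fixes X :: "'m::finite \<Rightarrow> 'a::topological_space" and lik :: "('b::euclidean_space)^'m \<Rightarrow> real"
  assumes "continuous_on UNIV lik" "sets M = sets (fun_space :: ('a \<Rightarrow> 'b) measure)"
  shows "(\<lambda>f. lik (\<chi> i. f (X i))) \<in> borel_measurable M"
proof -
  have "(\<lambda>f::'a \<Rightarrow> 'b. \<chi> i. f (X i)) \<in> borel_measurable fun_space"
    unfolding fun_space_def
    by (rule meas_vec_lambda) (rule measurable_component_singleton, simp)
  moreover have "lik \<in> borel_measurable borel" using assms(1) by (rule borel_measurable_continuous_onI)
  ultimately have "(\<lambda>f. lik (\<chi> i. f (X i))) \<in> borel_measurable (fun_space :: ('a \<Rightarrow> 'b) measure)"
    by (rule measurable_compose)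
  then show ?thesis by (simp add: measurable_cong_sets[OF assms(2) refl])
qed

lemma L_cont:
  fixes X :: "'m::finite \<Rightarrow> 'a::topological_space" and lik :: "('b::euclidean_space)^'m \<Rightarrow> real"
  assumes "continuous_on UNIV lik"
  shows "continuous_on UNIV (\<lambda>f::'a \<Rightarrow> 'b. lik (\<chi> i. f (X i)))"
proof -
  have "continuous_on UNIV (\<lambda>f::'a \<Rightarrow> 'b. \<chi> i. f (X i))"
    by (intro continuous_on_vec_lambda continuous_on_product_coordinates)
  then show ?thesis using continuous_on_compose2[OF assms] by auto
qed

theorem proposition1:
  fixes Pn :: "nat \<Rightarrow> (real^'d0 \<Rightarrow> real^'d1) measure"
    and P :: "(real^'d0 \<Rightarrow> real^'d1) measure"
    and X :: "'m::finite \<Rightarrow> real^'d0"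
    and lik :: "(real^'d1)^'m \<Rightarrow> real"
  assumes prior_n: "\<And>n. prob_space (Pn n)" "\<And>n. sets (Pn n) = sets fun_space"
    and prior: "prob_space P" "sets P = sets fun_space"
    and conv: "weak_conv Pn P"
    and lik_cont: "continuous_on UNIV lik"
    and lik_bdd: "bounded (range lik)"
    and lik_nonneg: "\<And>z. lik z \<ge> 0"
    and evidence_pos: "(\<integral>f. lik (\<chi> i. f (X i)) \<partial>P) > 0"
  shows "weak_conv (\<lambda>n. posterior (Pn n) (\<lambda>f. lik (\<chi> i. f (X i))))
                   (posterior P (\<lambda>f. lik (\<chi> i. f (X i))))"
proof -
  define L where "L = (\<lambda>f::real^'d0 \<Rightarrow> real^'d1. lik (\<chi> i. f (X i)))"
  have Lm: "L \<in> borel_measurable M" if "sets M = sets fun_space" for M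
    unfolding L_def using L_meas[OF lik_cont that] .
  have Lc: "continuous_on UNIV L" unfolding L_def by (rule L_cont[OF lik_cont])
  have Lnn: "\<And>f. L f \<ge> 0" unfolding L_def by (rule lik_nonneg)
  obtain B where B: "\<And>f. \<bar>L f\<bar> \<le> B" using lik_bdd unfolding L_def bounded_iff
    by (metis real_norm_def rangeI)
  have post: "(\<integral>x. h x \<partial>posterior M L) = (\<integral>x. L x * h x \<partial>M) / (\<integral>g. L g \<partial>M)"
    if M: "sets M = sets fun_space" and h: "h \<in> borel_measurable M" for M and h :: "_ \<Rightarrow> real"
  proof -
    have Z: "(\<integral>g. L g \<partial>M) \<ge> 0" using Lnn by (simp add: integral_nonneg)
    have "(\<integral>x. h x \<partial>posterior M L) = (\<integral>x. (L x / (\<integral>g. L g \<partial>M)) *\<^sub>R h x \<partial>M)"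
      unfolding posterior_def
      by (rule integral_density) (use h Lm[OF M] Lnn Z in auto)
    also have "\<dots> = (\<integral>x. (L x * h x) / (\<integral>g. L g \<partial>M) \<partial>M)" by simp
    also have "\<dots> = (\<integral>x. L x * h x \<partial>M) / (\<integral>g. L g \<partial>M)" by (rule integral_divide_zero)
    finally show ?thesis .
  qed
  show ?thesis
    unfolding weak_conv_def L_def[symmetric]
  proof (intro allI impI, elim conjE)
    fix h :: "_ \<Rightarrow> real"
    assume hm: "h \<in> borel_measurable (posterior P L)" and hc: "continuous_on UNIV h"
      and hb: "bounded (range h)"
    have hmP: "h \<in> borel_measurable P" using hm by (simp add: posterior_def)
    have hmM: "h \<in> borel_measurable M" if "sets M = sets fun_space" for M
      using hmP measurable_cong_sets[of P M] prior(2) that by simp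
    obtain C where C: "\<And>f. \<bar>h f\<bar> \<le> C" using hb unfolding bounded_iff
      by (metis real_norm_def rangeI)
    have t1: "(\<lambda>n. \<integral>x. L x * h x \<partial>Pn n) \<longlonglongrightarrow> (\<integral>x. L x * h x \<partial>P)"
    proof -
      have "bounded (range (\<lambda>x. L x * h x))"
        unfolding bounded_iff
      proof (intro exI allI ballI)
        fix y assume "y \<in> range (\<lambda>x. L x * h x)"
        then obtain x where "y = L x * h x" by auto
        then show "norm y \<le> B * C" using B[of x] C[of x]
          by (simp add: abs_mult mult_mono')
      qed
      moreover have "continuous_on UNIV (\<lambda>x. L x * h x)"
        using Lc hc by (intro continuous_on_mult)
      moreover have "(\<lambda>x. L x * h x) \<in> borel_measurable P"
        using Lm[OF prior(2)] hmP by measurable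
      ultimately show ?thesis using conv unfolding weak_conv_def by blast
    qed
    have t2: "(\<lambda>n. \<integral>x. L x \<partial>Pn n) \<longlonglongrightarrow> (\<integral>x. L x \<partial>P)"
    proof -
      have "bounded (range L)"
        unfolding bounded_iff using B by auto
      then show ?thesis using conv Lc Lm[OF prior(2)] unfolding weak_conv_def by blast
    qed
    have "(\<lambda>n. (\<integral>x. L x * h x \<partial>Pn n) / (\<integral>x. L x \<partial>Pn n))
          \<longlonglongrightarrow> (\<integral>x. L x * h x \<partial>P) / (\<integral>x. L x \<partial>P)"
      using t1 t2 evidence_pos unfolding L_def[symmetric] by (intro tendsto_divide) auto
    then show "(\<lambda>n. \<integral>x. h x \<partial>posterior (Pn n) L) \<longlonglongrightarrow> (\<integral>x. h x \<partial>posterior P L)"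
      using post[OF prior(2) hmP] post[OF prior_n(2) hmM[OF prior_n(2)]] by simp
  qed
qed

end
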